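(* Let $C\in\mathbb{R}^{n\times n}$ be symmetric, $\rho>0$, and let $(\tilde\sigma^k,\sigma^k,y^k)$ be generated by the ADMM-BM algorithm described in the context, with Assumption A holding. Then for all $k\ge1$ there exists an element $(g_{\tilde\sigma},g_\sigma)$ of the limiting subdifferential of $G_\rho$ at $(\tilde\sigma^{k+1},\sigma^{k+1})$ such that $$\left\|\begin{matrix}g_{\tilde\sigma}\\ g_\sigma\end{matrix}\right\|_F\le\Big(2\|C\|+\rho+\frac{\|C\|^2}{\rho}\Big)\left\|\begin{matrix}\tilde\sigma^{k+1}-\tilde\sigma^k\\ \sigma^{k+1}-\sigma^k\end{matrix}\right\|_F.$$
   Context: $\langle A,B\rangle=\mathrm{Tr}(A^\top B)$, $\|\cdot\|_F$ Frobenius norm (of the vertically stacked matrices), $\|C\|$ spectral norm. For $\sigma\in\mathbb{R}^{n\times r}$, $\sigma_i$ is its $i$-th row; $\mathcal{M}=\{\sigma:\|\sigma_i\|=1\ \forall i\}$; $\mathcal{I}_S$ the indicator function of $S$. $G_\rho(\tilde\sigma,\sigma)=\langle C,\tilde\sigma\tilde\sigma^\top\rangle+\frac\rho2\|\tilde\sigma-\sigma\|_F^2+\sum_i\mathcal{I}_{\{\|u\|=1\}}(\tilde\sigma_i)$. ADMM-BM with parameter $\rho$: choose $\tilde\sigma^0\in\mathcal{M}$, $\sigma^0=\tilde\sigma^0$, $y^0=C\tilde\sigma^0$. For $k=0,1,\dots$: $\gamma^k=\sigma^k-\frac1\rho(y^k+C\sigma^k)$ with rows $\gamma_i^k$; $\tilde\sigma^{k+1}_i=\gamma_i^k/\|\gamma_i^k\|$;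 $\sigma^{k+1}=\tilde\sigma^{k+1}+\frac1\rho(y^k-C\tilde\sigma^{k+1})$; $y^{k+1}=y^k+\rho(\tilde\sigma^{k+1}-\sigma^{k+1})$. Assumption A: $\gamma_i^k\neq0$ for all $i,k$. *)

theory Defs
  imports "HOL-Analysis.Analysis"
begin

text \<open>Matrices sigma in R^(n x r) are elements of real^'r^'n: sigma $ i is the i-th row.
  The inner product on real^'r^'n is the Frobenius inner product, its norm the Frobenius
  norm; on a pair (A, B) the product norm is the Frobenius norm of the stacked matrix.\<close>

definition spec_norm :: "real^'n^'m \<Rightarrow> real" where
  "spec_norm C = onorm (\<lambda>x. C *v x)"

definition unit_rows :: "(real^'r^'n) set" where
  "unit_rows = {\<sigma>. \<forall>i. norm (\<sigma> $ i) = 1}"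

definition G_rho :: "real^'n^'n \<Rightarrow> real \<Rightarrow> (real^'r^'n) \<times> (real^'r^'n) \<Rightarrow> ereal" where
  "G_rho C \<rho> p = (if fst p \<in> unit_rows
      then ereal (inner C (fst p ** transpose (fst p)) + \<rho> / 2 * (norm (fst p - snd p))^2)
      else \<infinity>)"

text \<open>Frechet (regular) subdifferential: f(x) finite and
  liminf_{y -> x, y ~= x} (f y - f x - <v, y - x>) / ||y - x|| >= 0.\<close>
definition frechet_subdiff :: "('a::real_inner \<Rightarrow> ereal) \<Rightarrow> 'a \<Rightarrow> 'a set" where
  "frechet_subdiff f x = {v. \<bar>f x\<bar> \<noteq> \<infinity> \<and>
      (\<forall>\<epsilon>>0. \<exists>\<delta>>0. \<forall>y. norm (y - x) < \<delta> \<longrightarrow>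
          f y \<ge> f x + ereal (inner v (y - x) - \<epsilon> * norm (y - x)))}"

definition limiting_subdiff :: "('a::real_inner \<Rightarrow> ereal) \<Rightarrow> 'a \<Rightarrow> 'a set" where
  "limiting_subdiff f x = {v. \<exists>xs vs. xs \<longlonglongrightarrow> x \<and> (\<lambda>k. f (xs k)) \<longlonglongrightarrow> f x \<and>
      vs \<longlonglongrightarrow> v \<and> (\<forall>k. vs k \<in> frechet_subdiff f (xs k))}"

definition admm_gamma :: "real^'n^'n \<Rightarrow> real \<Rightarrow> real^'r^'n \<Rightarrow> real^'r^'n \<Rightarrow> real^'r^'n" where
  "admm_gamma C \<rho> s y = s - (1 / \<rho>) *\<^sub>R (y + C ** s)"

end

theory Submission imports Defs begin

lemma sq_norm_cols: "(norm (Z::real^'r^'m))^2 = (\<Sum>j\<in>UNIV. (norm (column j Z))^2)"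
proof -
  have "(norm Z)^2 = (\<Sum>i\<in>UNIV. \<Sum>j\<in>UNIV. Z$i$j * Z$i$j)"
    by (simp add: power2_norm_eq_inner inner_vec_def inner_real_def)
  also have "\<dots> = (\<Sum>j\<in>UNIV. \<Sum>i\<in>UNIV. Z$i$j * Z$i$j)" by (rule sum.swap)
  also have "\<dots> = (\<Sum>j\<in>UNIV. (norm (column j Z))^2)"
    by (simp add: power2_norm_eq_inner inner_vec_def inner_real_def column_def)
  finally show ?thesis .
qed

lemma col_mult: "column j (C ** X) = C *v column j (X::real^'r^'n)"
  by (simp add: column_def matrix_matrix_mult_def matrix_vector_mult_def vec_eq_iff)

lemma spec_norm_nonneg: "0 \<le> spec_norm (C::real^'n^'m)"
  unfolding spec_norm_def by (rule onorm_pos_le) simp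

lemma mm_norm: "norm (C ** X) \<le> spec_norm C * norm (X::real^'r^'n)" for C :: "real^'n^'m"
proof -
  have "(norm (C ** X))^2 = (\<Sum>j\<in>UNIV. (norm (C *v column j X))^2)"
    by (subst sq_norm_cols[of "C ** X"]) (simp only: col_mult)
  also have "\<dots> \<le> (\<Sum>j\<in>UNIV. (spec_norm C * norm (column j X))^2)"
  proof (rule sum_mono)
    fix j
    have "norm (C *v column j X) \<le> spec_norm C * norm (column j X)"
      unfolding spec_norm_def by (rule onorm) simp
    then show "(norm (C *v column j X))^2 \<le> (spec_norm C * norm (column j X))^2"
      by (rule power_mono) simp
  qed
  also have "\<dots> = (spec_norm C)^2 * (\<Sum>j\<in>UNIV. (norm (column j X))^2)"
    by (simp add: power_mult_distrib sum_distrib_left)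
  also have "\<dots> = (spec_norm C * norm X)^2"
    by (simp only: power_mult_distrib sq_norm_cols[of X])
  finally have h: "(norm (C ** X))^2 \<le> (spec_norm C * norm X)^2" .
  show ?thesis
    by (rule power2_le_imp_le[OF h]) (simp add: spec_norm_nonneg)
qed

lemma inner_mm: "inner C (A ** transpose B) = inner (C ** B) (A::real^'r^'n)" for C :: "real^'n^'n"
proof -
  have "inner C (A ** transpose B) = (\<Sum>i\<in>UNIV. \<Sum>j\<in>UNIV. \<Sum>k\<in>UNIV. C$i$j * A$i$k * B$j$k)"
    by (simp add: inner_vec_def inner_real_def matrix_matrix_mult_def transpose_def
      sum_distrib_left mult_ac)
  also have "\<dots> = (\<Sum>i\<in>UNIV. \<Sum>k\<in>UNIV. \<Sum>j\<in>UNIV. C$i$j * A$i$k * B$j$k)"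
    by (rule sum.cong[OF refl], rule sum.swap)
  also have "\<dots> = inner (C ** B) A"
    by (simp add: inner_vec_def inner_real_def matrix_matrix_mult_def
      sum_distrib_right sum_distrib_left mult_ac)
  finally show ?thesis .
qed

lemma inner_mm_transp: "inner (C ** X) Y = inner X (transpose C ** (Y::real^'r^'n))" for C :: "real^'n^'n"
proof -
  have "inner (C ** X) Y = (\<Sum>i\<in>UNIV. \<Sum>k\<in>UNIV. \<Sum>j\<in>UNIV. C$i$j * X$j$k * Y$i$k)"
    by (simp add: inner_vec_def inner_real_def matrix_matrix_mult_def sum_distrib_right sum_distrib_left mult_ac)
  also have "\<dots> = (\<Sum>k\<in>UNIV. \<Sum>i\<in>UNIV. \<Sum>j\<in>UNIV. C$i$j * X$j$k * Y$i$k)"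
    by (rule sum.swap)
  also have "\<dots> = (\<Sum>k\<in>UNIV. \<Sum>j\<in>UNIV. \<Sum>i\<in>UNIV. C$i$j * X$j$k * Y$i$k)"
    by (rule sum.cong[OF refl], rule sum.swap)
  also have "\<dots> = (\<Sum>j\<in>UNIV. \<Sum>k\<in>UNIV. \<Sum>i\<in>UNIV. C$i$j * X$j$k * Y$i$k)"
    by (rule sum.swap)
  also have "\<dots> = inner X (transpose C ** Y)"
    by (simp add: inner_vec_def inner_real_def matrix_matrix_mult_def transpose_def
      sum_distrib_left mult_ac)
  finally show ?thesis .
qed


lemma frechet_mem:
  fixes C :: "real^'n^'n" and P S N :: "real^'r^'n" and lam :: "'n \<Rightarrow> real"
  assumes symC: "transpose C = C" and rho: "\<rho> > 0" and Pu: "P \<in> unit_rows"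
    and N: "\<And>i. N $ i = lam i *\<^sub>R P $ i"
  shows "(2 *\<^sub>R (C ** P) + \<rho> *\<^sub>R (P - S) + N, \<rho> *\<^sub>R (S - P)) \<in> frechet_subdiff (G_rho C \<rho>) (P, S)"
proof -
  define g where "g = (2 *\<^sub>R (C ** P) + \<rho> *\<^sub>R (P - S) + N, \<rho> *\<^sub>R (S - P))"
  define L where "L = (\<Sum>i\<in>UNIV. \<bar>lam i\<bar>)"
  define K where "K = spec_norm C + L + 1"
  have L0: "L \<ge> 0" unfolding L_def by (simp add: sum_nonneg)
  have K0: "K > 0" unfolding K_def using L0 spec_norm_nonneg[of C] by simp
  define base where "base = inner C (P ** transpose P) + \<rho> / 2 * (norm (P - S))^2"
  have Gp: "G_rho C \<rho> (P, S) = ereal base" using Pu by (simp add: G_rho_def base_def)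
  have main: "G_rho C \<rho> y \<ge> G_rho C \<rho> (P, S) + ereal (inner g (y - (P, S)) - \<epsilon> * norm (y - (P, S)))"
    if eps: "\<epsilon> > 0" and yd: "norm (y - (P, S)) < \<epsilon> / K" for \<epsilon> y
  proof -
    obtain a b where y: "y = (a, b)" by (cases y)
    show ?thesis
    proof (cases "a \<in> unit_rows")
      case False
      then show ?thesis by (simp add: y G_rho_def)
    next
      case True
      define d where "d = a - P"
      define e where "e = b - S"
      have ad: "a = P + d" and be: "b = S + e" by (simp_all add: d_def e_def)
      have yPS: "y - (P, S) = (d, e)" by (simp add: y d_def e_def)
      have h1: "inner C (a ** transpose a) = inner C (P ** transpose P) + 2 * inner (C ** P) d + inner (C ** d) d"
      proof -
        have "inner (C ** d) P = inner d (C ** P)"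
          using inner_mm_transp[of C d P] symC by simp
        then show ?thesis
          by (simp add: inner_mm ad matrix_add_ldistrib inner_add inner_commute)
      qed
      have h2: "(norm (a - b))^2 = (norm (P - S))^2 + 2 * inner (P - S) (d - e) + (norm (d - e))^2"
      proof -
        have "a - b = (P - S) + (d - e)" by (simp add: ad be)
        then show ?thesis
          by (simp add: power2_norm_eq_inner inner_add inner_commute)
      qed
      have h3i: "inner (P $ i) (d $ i) = - ((norm (d $ i))^2 / 2)" for i
      proof -
        have "norm (a $ i) = 1" "norm (P $ i) = 1" using True Pu by (auto simp: unit_rows_def)
        then have "inner (a $ i) (a $ i) = 1" "inner (P $ i) (P $ i) = 1"
          by (simp_all add: power2_norm_eq_inner[symmetric])
        moreover have di: "d $ i = a $ i - P $ i" by (simp add: d_def)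
        ultimately have dd: "(norm (d $ i))^2 = 2 - 2 * inner (P $ i) (a $ i)"
          by (simp add: power2_norm_eq_inner inner_diff inner_commute)
        have pd: "inner (P $ i) (d $ i) = inner (P $ i) (a $ i) - 1"
          using \<open>inner (P $ i) (P $ i) = 1\<close> by (simp add: di inner_diff)
        show ?thesis using dd pd by linarith
      qed
      have h3: "inner N d \<le> L * (norm d)^2"
      proof -
        have "inner N d = (\<Sum>i\<in>UNIV. lam i * inner (P $ i) (d $ i))"
          by (simp add: inner_vec_def N sum_distrib_left mult.assoc)
        also have "\<dots> \<le> (\<Sum>i\<in>UNIV. \<bar>lam i\<bar> * (norm d)^2)"
        proof (rule sum_mono)
          fix i
          have "lam i * inner (P $ i) (d $ i) = - (lam i * (norm (d $ i))^2 / 2)" by (simp add: h3i)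
          also have "\<dots> \<le> \<bar>lam i\<bar> * (norm (d $ i))^2"
          proof -
            have x0: "0 \<le> (norm (d $ i))^2" by simp
            have m: "- (lam i * (norm (d $ i))^2) \<le> \<bar>lam i\<bar> * (norm (d $ i))^2"
              using mult_right_mono[OF abs_ge_minus_self[of "lam i"] x0] by simp
            have "0 \<le> \<bar>lam i\<bar> * (norm (d $ i))^2" by simp
            then show ?thesis using m by linarith
          qed
          also have "\<dots> \<le> \<bar>lam i\<bar> * (norm d)^2"
            by (intro mult_left_mono power_mono) (auto simp: Finite_Cartesian_Product.norm_nth_le)
          finally show "lam i * inner (P $ i) (d $ i) \<le> \<bar>lam i\<bar> * (norm d)^2" .
        qed
        also have "\<dots> = L * (norm d)^2" by (simp add: L_def sum_distrib_right)
        finally show ?thesis .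
      qed
      have h4: "inner (C ** d) d \<ge> - spec_norm C * (norm d)^2"
      proof -
        have "\<bar>inner (C ** d) d\<bar> \<le> norm (C ** d) * norm d" by (rule Cauchy_Schwarz_ineq2)
        also have "\<dots> \<le> spec_norm C * norm d * norm d"
          by (intro mult_right_mono mm_norm) auto
        finally show ?thesis by (simp add: power2_eq_square)
      qed
      have ig: "inner g (d, e) = 2 * inner (C ** P) d + \<rho> * inner (P - S) (d - e) + inner N d"
        by (simp add: g_def inner_add inner_diff algebra_simps)
      have nd: "norm d \<le> norm (d, e)" by (rule norm_fst_le)
      have nde: "norm (d, e) < \<epsilon> / K" using yd yPS by simp
      have "K * (norm d)^2 \<le> K * (norm (d, e) * norm (d, e))"
        using nd K0 by (simp add: power2_eq_square mult_mono)
      also have "\<dots> \<le> K * (\<epsilon> / K * norm (d, e))"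
        using nde K0 by (intro mult_left_mono mult_right_mono) auto
      also have "\<dots> = \<epsilon> * norm (d, e)" using K0 by simp
      finally have q: "K * (norm d)^2 \<le> \<epsilon> * norm (d, e)" .
      have r: "0 \<le> \<rho> / 2 * (norm (d - e))^2" using rho by simp
      have "base + inner g (d, e) - \<epsilon> * norm (d, e)
              \<le> inner C (a ** transpose a) + \<rho> / 2 * (norm (a - b))^2"
      proof -
        have eq: "inner C (a ** transpose a) + \<rho> / 2 * (norm (a - b))^2
           = base + inner g (d, e) - inner N d + inner (C ** d) d + \<rho> / 2 * (norm (d - e))^2"
          unfolding base_def h1 h2 ig by (simp add: algebra_simps)
        have q': "spec_norm C * (norm d)^2 + L * (norm d)^2 + (norm d)^2 \<le> \<epsilon> * norm (d, e)"
          using q by (simp add: K_def algebra_simps)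
        have x0: "0 \<le> (norm d)^2" by simp
        show ?thesis unfolding eq using h3 h4 q' r x0 by linarith
      qed
      moreover have "G_rho C \<rho> y = ereal (inner C (a ** transpose a) + \<rho> / 2 * (norm (a - b))^2)"
        using True by (simp add: y G_rho_def)
      ultimately show ?thesis
        by (simp only: Gp yPS plus_ereal.simps ereal_less_eq)
    qed
  qed
  have "g \<in> frechet_subdiff (G_rho C \<rho>) (P, S)"
    unfolding frechet_subdiff_def
  proof (intro CollectI conjI allI impI)
    show "\<bar>G_rho C \<rho> (P, S)\<bar> \<noteq> \<infinity>" by (simp add: Gp)
    fix \<epsilon> :: real assume "\<epsilon> > 0"
    then show "\<exists>\<delta>>0. \<forall>y. norm (y - (P, S)) < \<delta> \<longrightarrow>
          G_rho C \<rho> y \<ge> G_rho C \<rho> (P, S) + ereal (inner g (y - (P, S)) - \<epsilon> * norm (y - (P, S)))"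
      using main K0 by (intro exI[of _ "\<epsilon> / K"]) auto
  qed
  then show ?thesis by (simp add: g_def)
qed


lemma mm_diff: "C ** (A - B) = C ** A - C ** (B::real^'r^'n)" for C :: "real^'n^'m"
  by (simp add: matrix_matrix_mult_def vec_eq_iff sum_subtractf algebra_simps)

lemma mm_add: "C ** (A + B) = C ** A + C ** (B::real^'r^'n)" for C :: "real^'n^'m"
  by (rule matrix_add_ldistrib)

lemma mm_scale: "C ** (c *\<^sub>R B) = c *\<^sub>R (C ** (B::real^'r^'n))" for C :: "real^'n^'m"
  by (simp add: matrix_matrix_mult_def vec_eq_iff sum_distrib_left mult_ac)

theorem lemma7:
  fixes C :: "real^'n^'n" and \<rho> :: real
    and st s y :: "nat \<Rightarrow> real^'r^'n"
  assumes symC: "transpose C = C"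
    and rho_pos: "\<rho> > 0"
    and init_M: "st 0 \<in> unit_rows"
    and init_s: "s 0 = st 0"
    and init_y: "y 0 = C ** st 0"
    and upd_st: "\<And>k. st (Suc k) =
        (\<chi> i. (admm_gamma C \<rho> (s k) (y k) $ i) /\<^sub>R norm (admm_gamma C \<rho> (s k) (y k) $ i))"
    and upd_s: "\<And>k. s (Suc k) = st (Suc k) + (1 / \<rho>) *\<^sub>R (y k - C ** st (Suc k))"
    and upd_y: "\<And>k. y (Suc k) = y k + \<rho> *\<^sub>R (st (Suc k) - s (Suc k))"
    and assmA: "\<And>k i. admm_gamma C \<rho> (s k) (y k) $ i \<noteq> 0"
  shows "\<forall>k\<ge>1. \<exists>g. g \<in> limiting_subdiff (G_rho C \<rho>) (st (Suc k), s (Suc k)) \<and>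
      norm g \<le> (2 * spec_norm C + \<rho> + (spec_norm C)^2 / \<rho>) *
               norm (st (Suc k) - st k, s (Suc k) - s k)"
proof (intro allI impI)
  fix k :: nat
  have rne: "\<rho> \<noteq> 0" using rho_pos by simp
  have yk: "y j = C ** st j" for j
  proof (cases j)
    case 0 then show ?thesis using init_y by simp
  next
    case (Suc m)
    have "y (Suc m) = y m + \<rho> *\<^sub>R (- ((1 / \<rho>) *\<^sub>R (y m - C ** st (Suc m))))"
      using upd_y[of m] upd_s[of m] by simp
    also have "\<dots> = C ** st (Suc m)" using rne by (simp add: algebra_simps)
    finally show ?thesis using Suc by simp
  qed
  define P where "P = st (Suc k)"
  define S where "S = s (Suc k)"
  define \<gamma> where "\<gamma> = admm_gamma C \<rho> (s k) (y k)"
  define lam where "lam i = \<rho> * (norm (\<gamma> $ i) - 1)" for i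
  define N where "N = \<rho> *\<^sub>R (\<gamma> - P)"
  have Pi: "P $ i = (1 / norm (\<gamma> $ i)) *\<^sub>R \<gamma> $ i" for i
    using upd_st[of k] by (simp add: P_def \<gamma>_def divide_inverse_commute)
  have gn: "norm (\<gamma> $ i) \<noteq> 0" for i using assmA[of k i] by (simp add: \<gamma>_def)
  have Pu: "P \<in> unit_rows"
    unfolding unit_rows_def using gn by (simp add: Pi)
  have Ni: "N $ i = lam i *\<^sub>R P $ i" for i
  proof -
    have "N $ i = \<rho> *\<^sub>R \<gamma> $ i - \<rho> *\<^sub>R ((1 / norm (\<gamma> $ i)) *\<^sub>R \<gamma> $ i)"
      by (simp add: N_def Pi scaleR_right_diff_distrib)
    also have "\<dots> = (\<rho> * (norm (\<gamma> $ i) - 1) * (1 / norm (\<gamma> $ i))) *\<^sub>R \<gamma> $ i"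
    proof -
      have "\<rho> * (norm (\<gamma> $ i) - 1) * (1 / norm (\<gamma> $ i)) = \<rho> - \<rho> * (1 / norm (\<gamma> $ i))"
        using gn[of i] by (simp add: field_simps)
      then show ?thesis by (simp only: scaleR_scaleR scaleR_diff_left)
    qed
    also have "\<dots> = lam i *\<^sub>R P $ i" by (simp add: Pi lam_def)
    finally show ?thesis .
  qed
  define g1 where "g1 = 2 *\<^sub>R (C ** P) + \<rho> *\<^sub>R (P - S) + N"
  define g2 where "g2 = \<rho> *\<^sub>R (S - P)"
  have fr: "(g1, g2) \<in> frechet_subdiff (G_rho C \<rho>) (P, S)"
    unfolding g1_def g2_def by (rule frechet_mem[OF symC rho_pos Pu Ni])
  have lim: "(g1, g2) \<in> limiting_subdiff (G_rho C \<rho>) (P, S)"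
    unfolding limiting_subdiff_def
    using fr by (intro CollectI exI[of _ "\<lambda>_. (P, S)"] exI[of _ "\<lambda>_. (g1, g2)"]) auto
  define dt where "dt = P - st k"
  define ds where "ds = S - s k"
  define u where "u = C ** P"
  define w where "w = C ** st k"
  define v where "v = C ** s k"
  have Sd: "S = P + (1 / \<rho>) *\<^sub>R (w - u)"
    using upd_s[of k] by (simp add: S_def P_def yk u_def w_def)
  have gd: "\<gamma> = s k - (1 / \<rho>) *\<^sub>R (w + v)"
    by (simp add: \<gamma>_def admm_gamma_def yk w_def v_def)
  have CS: "C ** S = u + (1 / \<rho>) *\<^sub>R (C ** w - C ** u)"
    by (simp add: Sd mm_add mm_scale mm_diff u_def)
  have e1: "g1 = C ** dt + (1 / \<rho>) *\<^sub>R (C ** (C ** dt)) + (C ** ds - \<rho> *\<^sub>R ds)"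
  proof -
    have cdt: "C ** dt = u - w" by (simp add: dt_def mm_diff u_def w_def)
    have cds: "C ** ds = C ** S - v" by (simp add: ds_def mm_diff v_def)
    have "C ** dt + (1 / \<rho>) *\<^sub>R (C ** (C ** dt)) + (C ** ds - \<rho> *\<^sub>R ds)
        = (u - w) + (1 / \<rho>) *\<^sub>R (C ** u - C ** w) + (C ** S - v) - \<rho> *\<^sub>R (S - s k)"
      by (simp only: cdt cds mm_diff) (simp add: ds_def algebra_simps)
    also have "\<dots> = g1"
      unfolding CS unfolding g1_def N_def Sd gd u_def[symmetric]
      using rne by (simp add: algebra_simps scaleR_2)
    finally show ?thesis by simp
  qed
  have e2: "g2 = - (C ** dt)"
    unfolding g2_def Sd using rne by (simp add: dt_def mm_diff u_def w_def algebra_simps)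
  define M where "M = norm (dt, ds)"
  define c where "c = spec_norm C"
  have c0: "c \<ge> 0" unfolding c_def by (rule spec_norm_nonneg)
  have mmc: "norm (C ** Z) \<le> c * norm Z" for Z :: "real^'r^'n"
    unfolding c_def by (rule mm_norm)
  have dtM: "norm dt \<le> M" and dsM: "norm ds \<le> M"
    unfolding M_def by (rule norm_fst_le, rule norm_snd_le)
  have Cdt: "norm (C ** dt) \<le> c * M"
    by (rule order_trans[OF mmc[of dt] mult_left_mono[OF dtM c0]])
  have Cds: "norm (C ** ds) \<le> c * M"
    by (rule order_trans[OF mmc[of ds] mult_left_mono[OF dsM c0]])
  have CCdt: "norm (C ** (C ** dt)) \<le> c * (c * M)"
    by (rule order_trans[OF mmc[of "C ** dt"] mult_left_mono[OF Cdt c0]])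
  have X: "norm (C ** ds, - (C ** dt)) \<le> c * M"
  proof -
    have "(norm (C ** ds, - (C ** dt)))^2 = (norm (C ** ds))^2 + (norm (C ** dt))^2"
      by (simp add: norm_Pair)
    also have "\<dots> \<le> (c * norm ds)^2 + (c * norm dt)^2"
      by (intro add_mono power_mono mmc) auto
    also have "\<dots> = c^2 * ((norm ds)^2 + (norm dt)^2)"
      by (simp add: power_mult_distrib algebra_simps)
    also have "(norm ds)^2 + (norm dt)^2 = M^2"
      by (simp add: M_def norm_Pair)
    also have "c^2 * M^2 = (c * M)^2" by (simp add: power_mult_distrib)
    finally have h: "(norm (C ** ds, - (C ** dt)))^2 \<le> (c * M)^2" .
    have "0 \<le> c * M" using c0 by (simp add: M_def)
    then show ?thesis by (rule power2_le_imp_le[OF h])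
  qed
  have Y: "norm (C ** dt + (1 / \<rho>) *\<^sub>R (C ** (C ** dt)), 0::real^'r^'n) \<le> c * M + c\<^sup>2 / \<rho> * M"
  proof -
    have "norm (C ** dt + (1 / \<rho>) *\<^sub>R (C ** (C ** dt)), 0::real^'r^'n)
        = norm (C ** dt + (1 / \<rho>) *\<^sub>R (C ** (C ** dt)))"
      by (simp add: norm_Pair)
    also have "\<dots> \<le> norm (C ** dt) + norm ((1 / \<rho>) *\<^sub>R (C ** (C ** dt)))"
      by (rule norm_triangle_ineq)
    also have "norm ((1 / \<rho>) *\<^sub>R (C ** (C ** dt))) = (1 / \<rho>) * norm (C ** (C ** dt))"
      using rho_pos by simp
    also have "norm (C ** dt) + (1 / \<rho>) * norm (C ** (C ** dt)) \<le> c * M + (1 / \<rho>) * (c * (c * M))"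
      using Cdt CCdt rho_pos by (intro add_mono mult_left_mono) auto
    also have "(1 / \<rho>) * (c * (c * M)) = c\<^sup>2 / \<rho> * M" by (simp add: power2_eq_square)
    finally show ?thesis .
  qed
  have Z: "norm (- (\<rho> *\<^sub>R ds), 0::real^'r^'n) \<le> \<rho> * M"
  proof -
    have "norm (- (\<rho> *\<^sub>R ds), 0::real^'r^'n) = \<rho> * norm ds"
      using rho_pos by (simp add: norm_Pair)
    also have "\<dots> \<le> \<rho> * M" using dsM rho_pos by simp
    finally show ?thesis .
  qed
  define A1 where "A1 = (C ** dt + (1 / \<rho>) *\<^sub>R (C ** (C ** dt)), 0::real^'r^'n)"
  define A2 where "A2 = (C ** ds, - (C ** dt))"
  define A3 where "A3 = (- (\<rho> *\<^sub>R ds), 0::real^'r^'n)"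
  have gsum: "(g1, g2) = A1 + A2 + A3"
    by (simp add: e1 e2 A1_def A2_def A3_def)
  have t1: "norm (A1 + A2 + A3) \<le> norm (A1 + A2) + norm A3" by (rule norm_triangle_ineq)
  have t2: "norm (A1 + A2) \<le> norm A1 + norm A2" by (rule norm_triangle_ineq)
  have "norm (g1, g2) \<le> (c * M + c\<^sup>2 / \<rho> * M) + c * M + \<rho> * M"
    unfolding gsum using t1 t2 X Y Z unfolding A1_def[symmetric] A2_def[symmetric] A3_def[symmetric]
    by linarith
  also have "\<dots> = (2 * c + \<rho> + c\<^sup>2 / \<rho>) * M" by (simp add: algebra_simps)
  finally have fin: "norm (g1, g2) \<le> (2 * c + \<rho> + c\<^sup>2 / \<rho>) * M" .
  show "\<exists>g. g \<in> limiting_subdiff (G_rho C \<rho>) (st (Suc k), s (Suc k)) \<and>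
      norm g \<le> (2 * spec_norm C + \<rho> + (spec_norm C)^2 / \<rho>) *
               norm (st (Suc k) - st k, s (Suc k) - s k)"
    apply (rule exI[of _ "(g1, g2)"])
    using lim fin unfolding P_def S_def M_def c_def dt_def ds_def by simp
qed

end
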